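(* Let $\mathcal Z$ be a compact metric space with a Radon measure $\mathcal H$, let $\pi:\mathcal Z\to\mathbb{R}^k$ be Lipschitz, and for each $t\in\mathbb{R}^k$ let $\eta_t$ be a finite Radon measure supported on $\pi^{-1}(t)$, such that $\mathcal H$ is equivalent to the Borel measure $A\mapsto\int_{\mathbb{R}^k}\eta_t(A)\,\mathrm dt$ with Radon–Nikodym derivative bounded away from $0$ and $+\infty$. Let $\mu_n:\mathcal Z\to[0,\infty)$ be bounded Borel functions such that (1) the measures $\mu_n\mathcal H$ converge weak* to a finite Radon measure $\mu$; (2) for every $t$, $\int\mu_n\,\mathrm d\eta_t$ converges to a finite number $X(t)$, uniformly in $t$; (3) $t\mapsto X(t)$ is continuous and there is $t_0\in\mathbb{R}^k$ with $X(t_0)\neq0$. Then the push-forward $\pi\mu$ is absolutely continuous with respect to Lebesgue measure, and $t_0$ is an interior point of $\pi(\operatorname{supp}\mu)$. *)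

theory Defs
  imports "HOL-Analysis.Analysis"
begin

definition measure_support :: "'a::topological_space measure \<Rightarrow> 'a set" where
  "measure_support M = {z. \<forall>U. open U \<longrightarrow> z \<in> U \<longrightarrow> emeasure M U > 0}"

definition fibre_measure :: "('b::euclidean_space \<Rightarrow> 'z::topological_space measure) \<Rightarrow> 'z measure" where
  "fibre_measure \<eta> = measure_of UNIV (sets borel) (\<lambda>A. \<integral>\<^sup>+ t. emeasure (\<eta> t) A \<partial>lborel)"

end

theory Submission
  imports Defs
begin

lemma fibre_sets:
  "sets (fibre_measure \<eta>) = sets (borel :: 'z::topological_space measure)"
  unfolding fibre_measure_def
  using sets_measure_of[of "sets (borel :: 'z measure)" UNIV] by (simp add: sets.sigma_sets_eq[of borel, simplified])

lemma fibre_emeasure: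
  fixes \<eta> :: "'b::euclidean_space \<Rightarrow> 'z::topological_space measure"
  assumes \<eta>_borel: "\<And>t. sets (\<eta> t) = sets borel"
    and \<eta>_meas: "\<And>A. A \<in> sets borel \<Longrightarrow> (\<lambda>t. emeasure (\<eta> t) A) \<in> borel_measurable lborel"
    and A: "A \<in> sets borel"
  shows "emeasure (fibre_measure \<eta>) A = (\<integral>\<^sup>+ t. emeasure (\<eta> t) A \<partial>lborel)"
  unfolding fibre_measure_def
proof (rule emeasure_measure_of_sigma)
  show "sigma_algebra UNIV (sets (borel :: 'z measure))"
    by (metis sets.sigma_algebra_axioms space_borel)
  show "positive (sets borel) (\<lambda>A. \<integral>\<^sup>+ t. emeasure (\<eta> t) A \<partial>lborel)"
    by (simp add: positive_def)
  show "countably_additive (sets borel) (\<lambda>A. \<integral>\<^sup>+ t. emeasure (\<eta> t) A \<partial>lborel)"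
    unfolding countably_additive_def
  proof (intro allI impI)
    fix F :: "nat \<Rightarrow> 'z set"
    assume F: "range F \<subseteq> sets borel" "disjoint_family F"
    have "(\<Sum>i. \<integral>\<^sup>+ t. emeasure (\<eta> t) (F i) \<partial>lborel) = (\<integral>\<^sup>+ t. (\<Sum>i. emeasure (\<eta> t) (F i)) \<partial>lborel)"
      using F by (intro nn_integral_suminf[symmetric] \<eta>_meas) auto
    also have "\<dots> = (\<integral>\<^sup>+ t. emeasure (\<eta> t) (\<Union> (range F)) \<partial>lborel)"
      using F by (intro nn_integral_cong suminf_emeasure) (auto simp: \<eta>_borel)
    finally show "(\<Sum>i. \<integral>\<^sup>+ t. emeasure (\<eta> t) (F i) \<partial>lborel) = (\<integral>\<^sup>+ t. emeasure (\<eta> t) (\<Union> (range F)) \<partial>lborel)" .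
  qed
qed (rule A)

lemma fibre_nn_integral:
  fixes \<eta> :: "'b::euclidean_space \<Rightarrow> 'z::topological_space measure"
  assumes \<eta>_borel: "\<And>t. sets (\<eta> t) = sets borel"
    and \<eta>_meas: "\<And>A. A \<in> sets borel \<Longrightarrow> (\<lambda>t. emeasure (\<eta> t) A) \<in> borel_measurable lborel"
    and f: "f \<in> borel_measurable borel"
  shows "(\<lambda>t. \<integral>\<^sup>+ z. f z \<partial>\<eta> t) \<in> borel_measurable lborel \<and>
         (\<integral>\<^sup>+ z. f z \<partial>fibre_measure \<eta>) = (\<integral>\<^sup>+ t. (\<integral>\<^sup>+ z. f z \<partial>\<eta> t) \<partial>lborel)"
  using f
proof (induction rule: borel_measurable_induct)
  case (cong f g)
  have "\<And>t. (\<integral>\<^sup>+ z. f z \<partial>\<eta> t) = (\<integral>\<^sup>+ z. g z \<partial>\<eta> t)"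
    using cong by (intro nn_integral_cong) (simp add: sets_eq_imp_space_eq[OF \<eta>_borel])
  moreover have "(\<integral>\<^sup>+ z. f z \<partial>fibre_measure \<eta>) = (\<integral>\<^sup>+ z. g z \<partial>fibre_measure \<eta>)"
    using cong by (intro nn_integral_cong) (simp add: sets_eq_imp_space_eq[OF fibre_sets])
  ultimately show ?case using cong by simp
next
  case (set A)
  have "\<And>t. (\<integral>\<^sup>+ z. indicator A z \<partial>\<eta> t) = emeasure (\<eta> t) A"
    using set by (simp add: \<eta>_borel)
  moreover have "(\<integral>\<^sup>+ z. indicator A z \<partial>fibre_measure \<eta>) = emeasure (fibre_measure \<eta>) A"
    using set by (simp add: fibre_sets)
  ultimately show ?case using set fibre_emeasure[OF \<eta>_borel \<eta>_meas set] \<eta>_meas by simp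
next
  case (mult u c)
  have um: "\<And>t. u \<in> borel_measurable (\<eta> t)" using mult measurable_cong_sets[OF \<eta>_borel refl] by blast
  have um2: "u \<in> borel_measurable (fibre_measure \<eta>)" using mult measurable_cong_sets[OF fibre_sets refl] by blast
  have "\<And>t. (\<integral>\<^sup>+ z. c * u z \<partial>\<eta> t) = c * (\<integral>\<^sup>+ z. u z \<partial>\<eta> t)"
    using um by (simp add: nn_integral_cmult)
  moreover have "(\<integral>\<^sup>+ z. c * u z \<partial>fibre_measure \<eta>) = c * (\<integral>\<^sup>+ z. u z \<partial>fibre_measure \<eta>)"
    using um2 by (simp add: nn_integral_cmult)
  moreover have "(\<lambda>t. c * (\<integral>\<^sup>+ z. u z \<partial>\<eta> t)) \<in> borel_measurable lborel"
  proof -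
    have m: "(\<lambda>t. \<integral>\<^sup>+ z. u z \<partial>\<eta> t) \<in> borel_measurable lborel" using mult by simp
    show ?thesis using m by measurable
  qed
  ultimately show ?case using mult by (simp add: nn_integral_cmult)
next
  case (add u v)
  have um: "\<And>t. u \<in> borel_measurable (\<eta> t)" "\<And>t. v \<in> borel_measurable (\<eta> t)"
    using add measurable_cong_sets[OF \<eta>_borel refl] by blast+
  have um2: "u \<in> borel_measurable (fibre_measure \<eta>)" "v \<in> borel_measurable (fibre_measure \<eta>)"
    using add measurable_cong_sets[OF fibre_sets refl] by blast+
  have "\<And>t. (\<integral>\<^sup>+ z. v z + u z \<partial>\<eta> t) = (\<integral>\<^sup>+ z. v z \<partial>\<eta> t) + (\<integral>\<^sup>+ z. u z \<partial>\<eta> t)"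
    using um by (simp add: nn_integral_add)
  moreover have "(\<integral>\<^sup>+ z. v z + u z \<partial>fibre_measure \<eta>) = (\<integral>\<^sup>+ z. v z \<partial>fibre_measure \<eta>) + (\<integral>\<^sup>+ z. u z \<partial>fibre_measure \<eta>)"
    using um2 by (simp add: nn_integral_add)
  moreover have "(\<lambda>t. (\<integral>\<^sup>+ z. v z \<partial>\<eta> t) + (\<integral>\<^sup>+ z. u z \<partial>\<eta> t)) \<in> borel_measurable lborel"
  proof -
    have m: "(\<lambda>t. \<integral>\<^sup>+ z. u z \<partial>\<eta> t) \<in> borel_measurable lborel"
      "(\<lambda>t. \<integral>\<^sup>+ z. v z \<partial>\<eta> t) \<in> borel_measurable lborel" using add by simp_all
    show ?thesis using m by measurable
  qed
  ultimately show ?case using add by (simp add: nn_integral_add)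
next
  case (seq U)
  have um: "\<And>i t. U i \<in> borel_measurable (\<eta> t)"
    using seq measurable_cong_sets[OF \<eta>_borel refl] by blast
  have um2: "\<And>i. U i \<in> borel_measurable (fibre_measure \<eta>)"
    using seq measurable_cong_sets[OF fibre_sets refl] by blast
  have e1: "\<And>t. (\<integral>\<^sup>+ z. (SUP i. U i) z \<partial>\<eta> t) = (SUP i. \<integral>\<^sup>+ z. U i z \<partial>\<eta> t)"
    unfolding SUP_apply using um seq by (intro nn_integral_monotone_convergence_SUP) auto
  have e2: "(\<integral>\<^sup>+ z. (SUP i. U i) z \<partial>fibre_measure \<eta>) = (SUP i. \<integral>\<^sup>+ z. U i z \<partial>fibre_measure \<eta>)"
    unfolding SUP_apply using um2 seq by (intro nn_integral_monotone_convergence_SUP) auto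
  have inc: "incseq (\<lambda>i t. \<integral>\<^sup>+ z. U i z \<partial>\<eta> t)"
    using \<open>incseq U\<close> by (auto simp: incseq_def le_fun_def intro!: nn_integral_mono)
  have e3: "(\<integral>\<^sup>+ t. (SUP i. \<integral>\<^sup>+ z. U i z \<partial>\<eta> t) \<partial>lborel) = (SUP i. \<integral>\<^sup>+ t. (\<integral>\<^sup>+ z. U i z \<partial>\<eta> t) \<partial>lborel)"
    using inc seq by (intro nn_integral_monotone_convergence_SUP) auto
  show ?case
    using e1 e2 e3 seq by (simp add: borel_measurable_SUP)
qed

lemma support_null:
  fixes \<mu> :: "'z::metric_space measure"
  assumes "compact (UNIV :: 'z set)" "sets \<mu> = sets borel" "closed F" "F \<inter> measure_support \<mu> = {}"
  shows "emeasure \<mu> F = 0"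
proof -
  let ?T = "{U. open U \<and> emeasure \<mu> U = 0}"
  have cF: "compact F" using compact_Int_closed[OF assms(1) assms(3)] by simp
  have "F \<subseteq> \<Union> ?T"
  proof
    fix z assume "z \<in> F"
    then have "z \<notin> measure_support \<mu>" using assms(4) by auto
    then obtain U where "open U" "z \<in> U" "\<not> emeasure \<mu> U > 0" unfolding measure_support_def by auto
    then show "z \<in> \<Union> ?T" by auto
  qed
  then obtain T' where T': "T' \<subseteq> ?T" "finite T'" "F \<subseteq> \<Union> T'"
    using compactE[OF cF] by (metis (no_types, lifting) mem_Collect_eq)
  have "T' \<subseteq> null_sets \<mu>"
    using T'(1) assms(2) by (auto simp: null_sets_def)
  then have "\<Union> T' \<in> null_sets \<mu>" using T'(2) by (rule null_sets.finite_Union[rotated])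
  moreover have "F \<in> sets \<mu>" using assms(2,3) by auto
  ultimately show ?thesis using T'(3) by (meson emeasure_eq_0 null_setsD1 null_setsD2)
qed

lemma support_closed:
  fixes \<mu> :: "'z::metric_space measure"
  shows "closed (measure_support \<mu>)"
proof -
  have "open (- measure_support \<mu>)"
    unfolding open_subopen[of "- measure_support \<mu>"]
  proof
    fix z assume "z \<in> - measure_support \<mu>"
    then obtain U where U: "open U" "z \<in> U" "\<not> emeasure \<mu> U > 0" unfolding measure_support_def by auto
    have "U \<subseteq> - measure_support \<mu>" using U unfolding measure_support_def by auto
    then show "\<exists>T. open T \<and> z \<in> T \<and> T \<subseteq> - measure_support \<mu>" using U by blast
  qed
  then show ?thesis by (simp add: closed_def)
qed
theorem lemma3p5:
  fixes H :: "'z::metric_space measure"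
    and \<pi> :: "'z \<Rightarrow> 'b::euclidean_space"
    and \<eta> :: "'b \<Rightarrow> 'z measure"
    and \<mu>n :: "nat \<Rightarrow> 'z \<Rightarrow> real"
    and \<mu> :: "'z measure"
    and X :: "'b \<Rightarrow> real"
    and t0 :: 'b
  assumes Z_compact: "compact (UNIV :: 'z set)"
    and H_borel: "sets H = sets borel" and H_finite: "finite_measure H"
    and \<pi>_lipschitz: "\<exists>L. L-lipschitz_on UNIV \<pi>"
    and \<eta>_borel: "\<And>t. sets (\<eta> t) = sets borel"
    and \<eta>_finite: "\<And>t. finite_measure (\<eta> t)"
    and \<eta>_supp: "\<And>t. emeasure (\<eta> t) (UNIV - \<pi> -` {t}) = 0"
    and \<eta>_meas: "\<And>A. A \<in> sets borel \<Longrightarrow> (\<lambda>t. emeasure (\<eta> t) A) \<in> borel_measurable lborel"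
    and H_equiv: "\<exists>\<rho> c C. \<rho> \<in> borel_measurable borel \<and> 0 < c \<and> c \<le> C \<and>
                      (\<forall>z. c \<le> \<rho> z \<and> \<rho> z \<le> C) \<and>
                      H = density (fibre_measure \<eta>) (\<lambda>z. ennreal (\<rho> z))"
    and \<mu>n_meas: "\<And>n. \<mu>n n \<in> borel_measurable borel"
    and \<mu>n_nonneg: "\<And>n z. 0 \<le> \<mu>n n z"
    and \<mu>n_bdd: "\<And>n. \<exists>B. \<forall>z. \<mu>n n z \<le> B"
    and \<mu>_borel: "sets \<mu> = sets borel" and \<mu>_finite: "finite_measure \<mu>"
    and weak_star: "\<And>f::'z \<Rightarrow> real. continuous_on UNIV f \<Longrightarrow>
                       (\<lambda>n. \<integral>z. f z * \<mu>n n z \<partial>H) \<longlonglongrightarrow> (\<integral>z. f z \<partial>\<mu>)"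
    and unif: "uniform_limit UNIV (\<lambda>n t. \<integral>z. \<mu>n n z \<partial>(\<eta> t)) X sequentially"
    and X_cont: "continuous_on UNIV X"
    and X_t0: "X t0 \<noteq> 0"
  shows "absolutely_continuous lborel (distr \<mu> lborel \<pi>)
         \<and> t0 \<in> interior (\<pi> ` measure_support \<mu>)"
proof -
  obtain \<rho> c C where \<rho>m: "\<rho> \<in> borel_measurable borel" and cpos: "0 < c" and cC: "c \<le> C"
    and \<rho>b: "\<And>z. c \<le> \<rho> z \<and> \<rho> z \<le> C" and Hd: "H = density (fibre_measure \<eta>) (\<lambda>z. ennreal (\<rho> z))"
    using H_equiv by blast
  obtain L where "L-lipschitz_on UNIV \<pi>" using \<pi>_lipschitz by blast
  then have \<pi>c: "continuous_on UNIV \<pi>" by (rule lipschitz_on_continuous_on)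
  have \<pi>m: "\<pi> \<in> borel_measurable borel" using \<pi>c by (rule borel_measurable_continuous_onI)
  have cr: "compact (range \<pi>)" using compact_continuous_image[OF \<pi>c Z_compact] .
  have spH: "space H = UNIV" using sets_eq_imp_space_eq[OF H_borel] by simp
  have sp\<mu>: "space \<mu> = UNIV" using sets_eq_imp_space_eq[OF \<mu>_borel] by simp
  have sp\<eta>: "\<And>t. space (\<eta> t) = UNIV" using sets_eq_imp_space_eq[OF \<eta>_borel] by simp

  have Hint: "(\<integral>\<^sup>+z. f z \<partial>H) = (\<integral>\<^sup>+ t. (\<integral>\<^sup>+ z. ennreal (\<rho> z) * f z \<partial>\<eta> t) \<partial>lborel)"
    if f: "f \<in> borel_measurable borel" for f
  proof -
    have "(\<integral>\<^sup>+z. f z \<partial>H) = (\<integral>\<^sup>+ z. ennreal (\<rho> z) * f z \<partial>fibre_measure \<eta>)"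
      unfolding Hd using f \<rho>m
      by (intro nn_integral_density) (auto simp: measurable_cong_sets[OF fibre_sets refl])
    also have "\<dots> = (\<integral>\<^sup>+ t. (\<integral>\<^sup>+ z. ennreal (\<rho> z) * f z \<partial>\<eta> t) \<partial>lborel)"
      using fibre_nn_integral[OF \<eta>_borel \<eta>_meas, of "\<lambda>z. ennreal (\<rho> z) * f z"] f \<rho>m by auto
    finally show ?thesis .
  qed

  have null_out: "(\<integral>\<^sup>+ z. f z \<partial>\<eta> t) = 0" if "t \<notin> range \<pi>" for f t
  proof -
    have "UNIV - \<pi> -` {t} = UNIV" using that by auto
    then have "UNIV \<in> null_sets (\<eta> t)" using \<eta>_supp[of t] sp\<eta>[of t]
      by (metis null_setsI sets.top)
    then have "AE z in \<eta> t. f z = 0" by (rule AE_I') auto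
    then have "(\<integral>\<^sup>+ z. f z \<partial>\<eta> t) = (\<integral>\<^sup>+ z. 0 \<partial>\<eta> t)" by (rule nn_integral_cong_AE)
    then show ?thesis by simp
  qed

  have AEfib: "AE z in \<eta> t. \<pi> z = t" for t
  proof (rule AE_I')
    have "\<pi> -` {t} \<in> sets borel" using \<pi>m by (simp add: measurable_sets_borel)
    then have "UNIV - \<pi> -` {t} \<in> sets (\<eta> t)" using \<eta>_borel by auto
    then show "UNIV - \<pi> -` {t} \<in> null_sets (\<eta> t)" using \<eta>_supp by (simp add: null_sets_def)
  qed auto

  define Y where "Y n t = (\<integral>z. \<mu>n n z \<partial>\<eta> t)" for n t
  have \<mu>n_m: "\<And>n t. \<mu>n n \<in> borel_measurable (\<eta> t)"
    using \<mu>n_meas measurable_cong_sets[OF \<eta>_borel refl] by blast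
  have Yenn: "ennreal (Y n t) = (\<integral>\<^sup>+ z. ennreal (\<mu>n n z) \<partial>\<eta> t)" for n t
  proof -
    obtain B where B: "\<And>z. \<mu>n n z \<le> B" using \<mu>n_bdd by blast
    have "integrable (\<eta> t) (\<mu>n n)"
      using B \<mu>n_nonneg \<mu>n_m
      by (intro finite_measure.integrable_const_bound[OF \<eta>_finite, of _ B]) auto
    then show ?thesis unfolding Y_def using \<mu>n_nonneg
      by (intro nn_integral_eq_integral[symmetric]) auto
  qed
  have Ynn: "0 \<le> Y n t" for n t unfolding Y_def using \<mu>n_nonneg by (simp add: integral_nonneg)
  have \<rho>m': "\<And>t. \<rho> \<in> borel_measurable (\<eta> t)"
    using \<rho>m measurable_cong_sets[OF \<eta>_borel refl] by blast
  have lowb: "ennreal c * ennreal (Y n t) \<le> (\<integral>\<^sup>+ z. ennreal (\<rho> z) * ennreal (\<mu>n n z) \<partial>\<eta> t)" for n t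
  proof -
    have "ennreal c * ennreal (Y n t) = (\<integral>\<^sup>+ z. ennreal c * ennreal (\<mu>n n z) \<partial>\<eta> t)"
      unfolding Yenn using \<mu>n_m by (simp add: nn_integral_cmult)
    also have "\<dots> \<le> (\<integral>\<^sup>+ z. ennreal (\<rho> z) * ennreal (\<mu>n n z) \<partial>\<eta> t)"
      using \<rho>b by (intro nn_integral_mono mult_right_mono) (auto intro: ennreal_leI)
    finally show ?thesis .
  qed
  have uppb: "(\<integral>\<^sup>+ z. ennreal (\<rho> z) * ennreal (\<mu>n n z) \<partial>\<eta> t) \<le> ennreal C * ennreal (Y n t)" for n t
  proof -
    have "(\<integral>\<^sup>+ z. ennreal (\<rho> z) * ennreal (\<mu>n n z) \<partial>\<eta> t) \<le> (\<integral>\<^sup>+ z. ennreal C * ennreal (\<mu>n n z) \<partial>\<eta> t)"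
      using \<rho>b by (intro nn_integral_mono mult_right_mono) (auto intro: ennreal_leI)
    also have "\<dots> = ennreal C * ennreal (Y n t)"
      unfolding Yenn using \<mu>n_m by (simp add: nn_integral_cmult)
    finally show ?thesis .
  qed

  have key: "ennreal (\<integral>z. g (\<pi> z) * \<mu>n n z \<partial>H) =
      (\<integral>\<^sup>+ t. ennreal (g t) * (\<integral>\<^sup>+ z. ennreal (\<rho> z) * ennreal (\<mu>n n z) \<partial>\<eta> t) \<partial>lborel)"
    if gc: "continuous_on UNIV g" and gnn: "\<And>s. 0 \<le> g s" for g :: "'b \<Rightarrow> real" and n
  proof -
    have gpc: "continuous_on UNIV (\<lambda>z. g (\<pi> z))"
      using continuous_on_compose[OF \<pi>c, of g] gc by (simp add: o_def continuous_on_subset)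
    have "compact ((\<lambda>z. g (\<pi> z)) ` UNIV)" using compact_continuous_image[OF gpc Z_compact] .
    then obtain Bg where Bg: "\<And>z. \<bar>g (\<pi> z)\<bar> \<le> Bg"
      using compact_imp_bounded bounded_real by fastforce
    obtain B where B: "\<And>z. \<mu>n n z \<le> B" using \<mu>n_bdd by blast
    have gpm: "(\<lambda>z. g (\<pi> z)) \<in> borel_measurable borel" using gpc by (rule borel_measurable_continuous_onI)
    have fm: "(\<lambda>z. g (\<pi> z) * \<mu>n n z) \<in> borel_measurable borel" using gpm \<mu>n_meas by measurable
    have fmH: "(\<lambda>z. g (\<pi> z) * \<mu>n n z) \<in> borel_measurable H"
      using fm measurable_cong_sets[OF H_borel refl] by blast
    have bd: "norm (g (\<pi> z) * \<mu>n n z) \<le> Bg * B" for z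
    proof -
      have "norm (g (\<pi> z) * \<mu>n n z) = \<bar>g (\<pi> z)\<bar> * \<mu>n n z" using \<mu>n_nonneg by (simp add: abs_mult)
      also have "\<dots> \<le> Bg * B" using Bg B \<mu>n_nonneg by (meson abs_ge_zero mult_mono order_trans)
      finally show ?thesis .
    qed
    have "integrable H (\<lambda>z. g (\<pi> z) * \<mu>n n z)"
      using bd fmH by (intro finite_measure.integrable_const_bound[OF H_finite, of _ "Bg * B"]) auto
    then have "ennreal (\<integral>z. g (\<pi> z) * \<mu>n n z \<partial>H) = (\<integral>\<^sup>+ z. ennreal (g (\<pi> z) * \<mu>n n z) \<partial>H)"
      using gnn \<mu>n_nonneg by (intro nn_integral_eq_integral[symmetric]) auto
    also have "\<dots> = (\<integral>\<^sup>+ t. (\<integral>\<^sup>+ z. ennreal (\<rho> z) * ennreal (g (\<pi> z) * \<mu>n n z) \<partial>\<eta> t) \<partial>lborel)"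
      using gpm \<mu>n_meas[of n] by (intro Hint) measurable
    also have "\<dots> = (\<integral>\<^sup>+ t. ennreal (g t) * (\<integral>\<^sup>+ z. ennreal (\<rho> z) * ennreal (\<mu>n n z) \<partial>\<eta> t) \<partial>lborel)"
    proof (rule nn_integral_cong)
      fix t
      have "(\<integral>\<^sup>+ z. ennreal (\<rho> z) * ennreal (g (\<pi> z) * \<mu>n n z) \<partial>\<eta> t) =
            (\<integral>\<^sup>+ z. ennreal (g t) * (ennreal (\<rho> z) * ennreal (\<mu>n n z)) \<partial>\<eta> t)"
        using AEfib[of t]
        by (intro nn_integral_cong_AE) (auto simp: ennreal_mult gnn \<mu>n_nonneg mult_ac)
      also have "\<dots> = ennreal (g t) * (\<integral>\<^sup>+ z. ennreal (\<rho> z) * ennreal (\<mu>n n z) \<partial>\<eta> t)"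
      proof (rule nn_integral_cmult)
        have A: "(\<lambda>x. ennreal (\<rho> x)) \<in> borel_measurable (\<eta> t)"
          by (rule measurable_compose[OF \<rho>m'[of t] measurable_ennreal])
        have B: "(\<lambda>x. ennreal (\<mu>n n x)) \<in> borel_measurable (\<eta> t)"
          by (rule measurable_compose[OF \<mu>n_m[of n t] measurable_ennreal])
        show "(\<lambda>x. ennreal (\<rho> x) * ennreal (\<mu>n n x)) \<in> borel_measurable (\<eta> t)"
          using A B by (rule borel_measurable_times_ennreal)
      qed
      finally show "(\<integral>\<^sup>+ z. ennreal (\<rho> z) * ennreal (g (\<pi> z) * \<mu>n n z) \<partial>\<eta> t) =
            ennreal (g t) * (\<integral>\<^sup>+ z. ennreal (\<rho> z) * ennreal (\<mu>n n z) \<partial>\<eta> t)" .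
    qed
    finally show ?thesis .
  qed
  have conv: "(\<lambda>n. \<integral>z. g (\<pi> z) * \<mu>n n z \<partial>H) \<longlonglongrightarrow> (\<integral>z. g (\<pi> z) \<partial>\<mu>)"
    if gc: "continuous_on UNIV g" for g :: "'b \<Rightarrow> real"
  proof -
    have gpc: "continuous_on UNIV (\<lambda>z. g (\<pi> z))"
      using continuous_on_compose[OF \<pi>c, of g] gc by (simp add: o_def continuous_on_subset)
    then show ?thesis by (rule weak_star)
  qed
  have unif': "\<forall>\<^sub>F n in sequentially. \<forall>t. \<bar>Y n t - X t\<bar> < e" if "e > 0" for e
    using uniform_limitD[OF unif that] unfolding Y_def by (simp add: dist_real_def)
  obtain M where M: "\<And>t. t \<in> range \<pi> \<Longrightarrow> \<bar>X t\<bar> \<le> M"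
  proof -
    have "compact (X ` range \<pi>)"
      using compact_continuous_image[OF continuous_on_subset[OF X_cont] cr] by auto
    then obtain M where "\<forall>x\<in>X ` range \<pi>. \<bar>x\<bar> \<le> M"
      using compact_imp_bounded bounded_real by metis
    then show ?thesis using that by auto
  qed
  define K where "K = C * (M + 1)"
  have K0: "0 \<le> K"
  proof -
    have "0 \<le> M" using M[of "\<pi> undefined"] by auto
    then show ?thesis unfolding K_def using cC cpos by simp
  qed
  have bnd: "\<forall>\<^sub>F n in sequentially. \<forall>t. (\<integral>\<^sup>+ z. ennreal (\<rho> z) * ennreal (\<mu>n n z) \<partial>\<eta> t) \<le> ennreal K"
  proof -
    have "\<forall>\<^sub>F n in sequentially. \<forall>t. \<bar>Y n t - X t\<bar> < 1" using unif' by simp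
    then show ?thesis
    proof (rule eventually_mono)
      fix n assume h: "\<forall>t. \<bar>Y n t - X t\<bar> < 1"
      show "\<forall>t. (\<integral>\<^sup>+ z. ennreal (\<rho> z) * ennreal (\<mu>n n z) \<partial>\<eta> t) \<le> ennreal K"
      proof
        fix t
        show "(\<integral>\<^sup>+ z. ennreal (\<rho> z) * ennreal (\<mu>n n z) \<partial>\<eta> t) \<le> ennreal K"
        proof (cases "t \<in> range \<pi>")
          case True
          have "Y n t \<le> M + 1" using h M[OF True] by (smt (verit))
          then have "C * Y n t \<le> K" unfolding K_def using cC cpos by (simp add: mult_left_mono)
          then have "ennreal C * ennreal (Y n t) \<le> ennreal K"
            using cC cpos Ynn[of n t] by (simp add: ennreal_mult[symmetric] ennreal_leI)
          then show ?thesis using uppb order_trans by blast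
        next
          case False then show ?thesis using null_out by simp
        qed
      qed
    qed
  qed
  have upper: "(\<integral>z. g (\<pi> z) \<partial>\<mu>) \<le> K * measure lborel T"
    if gc: "continuous_on UNIV g" and gnn: "\<And>s. 0 \<le> g s" and gT: "\<And>s. g s \<le> indicator T s"
      and Tm: "T \<in> sets borel" and Tf: "emeasure lborel T < \<infinity>" for g :: "'b \<Rightarrow> real" and T
  proof -
    have ev: "\<forall>\<^sub>F n in sequentially. (\<integral>z. g (\<pi> z) * \<mu>n n z \<partial>H) \<le> K * measure lborel T"
      using bnd
    proof (rule eventually_mono)
      fix n assume h: "\<forall>t. (\<integral>\<^sup>+ z. ennreal (\<rho> z) * ennreal (\<mu>n n z) \<partial>\<eta> t) \<le> ennreal K"
      have "ennreal (\<integral>z. g (\<pi> z) * \<mu>n n z \<partial>H) =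
        (\<integral>\<^sup>+ t. ennreal (g t) * (\<integral>\<^sup>+ z. ennreal (\<rho> z) * ennreal (\<mu>n n z) \<partial>\<eta> t) \<partial>lborel)"
        by (rule key[OF gc gnn])
      also have "\<dots> \<le> (\<integral>\<^sup>+ t. ennreal K * indicator T t \<partial>lborel)"
      proof (rule nn_integral_mono)
        fix t
        have "ennreal (g t) \<le> indicator T t"
        proof (cases "t \<in> T")
          case True then show ?thesis using gT[of t] by simp
        next
          case False then show ?thesis using gT[of t] gnn[of t] by simp
        qed
        then show "ennreal (g t) * (\<integral>\<^sup>+ z. ennreal (\<rho> z) * ennreal (\<mu>n n z) \<partial>\<eta> t) \<le> ennreal K * indicator T t"
          using h by (metis mult.commute mult_mono zero_le)
      qed
      also have "\<dots> = ennreal K * emeasure lborel T"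
        using Tm by (simp add: nn_integral_cmult_indicator)
      also have "\<dots> = ennreal (K * measure lborel T)"
        using Tf K0 by (simp add: emeasure_eq_ennreal_measure ennreal_mult)
      finally show "(\<integral>z. g (\<pi> z) * \<mu>n n z \<partial>H) \<le> K * measure lborel T"
        using K0 by (simp add: ennreal_le_iff)
    qed
    show ?thesis by (rule tendsto_upperbound[OF conv[OF gc] ev]) simp
  qed
  have openb: "measure \<mu> (\<pi> -` T) \<le> K * measure lborel T"
    if To: "open T" and Tf: "emeasure lborel T < \<infinity>" for T
  proof -
    have TU: "T \<noteq> UNIV" using Tf by auto
    define gm where "gm m t = min 1 (real m * infdist t (-T))" for m :: nat and t
    have gc: "continuous_on UNIV (gm m)" for m unfolding gm_def by (intro continuous_intros)
    have gnn: "0 \<le> gm m s" for m s unfolding gm_def by (simp add: infdist_nonneg)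
    have gT: "gm m s \<le> indicator T s" for m s unfolding gm_def by (cases "s \<in> T") auto
    have Tb: "T \<in> sets borel" using To by auto
    have le: "(\<integral>z. gm m (\<pi> z) \<partial>\<mu>) \<le> K * measure lborel T" for m
      using upper[OF gc gnn gT Tb Tf] .
    have PT: "\<pi> -` T \<in> sets \<mu>" using measurable_sets_borel[OF \<pi>m Tb] \<mu>_borel by simp
    have lim: "(\<lambda>m. \<integral>z. gm m (\<pi> z) \<partial>\<mu>) \<longlonglongrightarrow> (\<integral>z. indicator (\<pi> -` T) z \<partial>\<mu>)"
    proof (rule integral_dominated_convergence[where w="\<lambda>_. 1"])
      show "(indicator (\<pi> -` T) :: 'z \<Rightarrow> real) \<in> borel_measurable \<mu>"
        using PT by simp
      show "(\<lambda>z. gm m (\<pi> z)) \<in> borel_measurable \<mu>" for m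
      proof -
        have "(\<lambda>z. gm m (\<pi> z)) \<in> borel_measurable borel"
          using gc[of m] \<pi>c by (intro borel_measurable_continuous_onI)
             (simp add: continuous_on_compose2[of UNIV "gm m" UNIV \<pi>])
        then show ?thesis using measurable_cong_sets[OF \<mu>_borel refl] by blast
      qed
      show "integrable \<mu> (\<lambda>_. 1::real)"
        by (rule finite_measure.integrable_const[OF \<mu>_finite])
      show "AE z in \<mu>. (\<lambda>m. gm m (\<pi> z)) \<longlonglongrightarrow> indicator (\<pi> -` T) z"
      proof (rule AE_I2)
        fix z
        show "(\<lambda>m. gm m (\<pi> z)) \<longlonglongrightarrow> indicator (\<pi> -` T) z"
        proof (cases "\<pi> z \<in> T")
          case True
          have "infdist (\<pi> z) (-T) \<noteq> 0"
            using in_closed_iff_infdist_zero[of "-T" "\<pi> z"] To TU True by auto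
          then have d: "infdist (\<pi> z) (-T) > 0" using infdist_nonneg by (metis less_eq_real_def)
          obtain N :: nat where N: "1 / infdist (\<pi> z) (-T) < real N" using reals_Archimedean2 by blast
          have "\<forall>\<^sub>F m in sequentially. gm m (\<pi> z) = 1"
          proof (rule eventually_sequentiallyI[of N])
            fix m assume "N \<le> m"
            then have "real N * infdist (\<pi> z) (-T) \<le> real m * infdist (\<pi> z) (-T)"
              using d by (intro mult_right_mono) auto
            moreover have "1 < real N * infdist (\<pi> z) (-T)" using N d by (simp add: field_simps)
            ultimately show "gm m (\<pi> z) = 1" unfolding gm_def by simp
          qed
          then show ?thesis using True by (simp add: tendsto_eventually)
        next
          case False
          then have "gm m (\<pi> z) = 0" for m unfolding gm_def by simp
          then show ?thesis using False by simp
        qed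
      qed
      show "AE z in \<mu>. norm (gm m (\<pi> z)) \<le> 1" for m
        using gnn by (auto simp: gm_def)
    qed
    have "(\<integral>z. indicator (\<pi> -` T) z \<partial>\<mu>) = measure \<mu> (\<pi> -` T)" using sp\<mu> by simp
    then show ?thesis using tendsto_upperbound[OF lim] le by simp
  qed
  have part1: "absolutely_continuous lborel (distr \<mu> lborel \<pi>)"
    unfolding absolutely_continuous_def
  proof
    fix N :: "'b set" assume N: "N \<in> null_sets lborel"
    have \<pi>m2: "\<pi> \<in> measurable \<mu> lborel" using \<pi>m measurable_cong_sets[OF \<mu>_borel sets_lborel] by blast
    have Nb: "N \<in> sets borel" using N by (simp add: null_sets_def)
    have Pm: "\<pi> -` N \<in> sets \<mu>" using measurable_sets_borel[OF \<pi>m Nb] \<mu>_borel by simp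
    have small: "measure \<mu> (\<pi> -` N) \<le> K * e" if e: "e > 0" for e
    proof -
      have "N \<in> sets lebesgue" using null_sets_completionI[OF N] by auto
      then obtain T where T: "open T" "N \<subseteq> T" "emeasure lebesgue (T - N) < ennreal e"
        using sets_lebesgue_outer_open e by metis
      have Tb: "T \<in> sets borel" using T(1) by auto
      have N0: "emeasure lebesgue N = 0" using null_sets_completionI[OF N] by auto
      have "emeasure lborel T = emeasure lebesgue T" using Tb by (simp add: emeasure_completion)
      also have "\<dots> = emeasure lebesgue (N \<union> (T - N))" using T(2) by (simp add: Un_absorb1)
      also have "\<dots> \<le> emeasure lebesgue N + emeasure lebesgue (T - N)"
        using Tb \<open>N \<in> sets lebesgue\<close> by (intro emeasure_subadditive) auto
      also have "\<dots> < ennreal e" using N0 T(3) by simp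
      finally have Te: "emeasure lborel T < ennreal e" .
      have Tf: "emeasure lborel T < \<infinity>" using Te ennreal_less_top[of e] unfolding infinity_ennreal_def by (rule order.strict_trans)
      have mT: "measure lborel T < e"
        using Te Tf e by (simp add: emeasure_eq_ennreal_measure ennreal_less_iff)
      have PT: "\<pi> -` T \<in> sets \<mu>" using measurable_sets_borel[OF \<pi>m Tb] \<mu>_borel by simp
      have "measure \<mu> (\<pi> -` N) \<le> measure \<mu> (\<pi> -` T)"
        using finite_measure.finite_measure_mono[OF \<mu>_finite _ PT] T(2) by blast
      also have "\<dots> \<le> K * measure lborel T" by (rule openb[OF T(1) Tf])
      also have "\<dots> \<le> K * e" using mT K0 by (simp add: mult_left_mono)
      finally show ?thesis .
    qed
    have "measure \<mu> (\<pi> -` N) \<le> 0"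
    proof (rule field_le_epsilon)
      fix e :: real assume e: "0 < e"
      have "e / (K + 1) > 0" using e K0 by simp
      then have "measure \<mu> (\<pi> -` N) \<le> K * (e / (K + 1))" by (rule small)
      also have "\<dots> \<le> e" using K0 e by (simp add: field_simps)
      finally show "measure \<mu> (\<pi> -` N) \<le> 0 + e" by simp
    qed
    then have "emeasure \<mu> (\<pi> -` N) = 0"
      using finite_measure.emeasure_eq_measure[OF \<mu>_finite] measure_nonneg[of \<mu>] by (metis antisym ennreal_0)
    then show "N \<in> null_sets (distr \<mu> lborel \<pi>)"
      using null_sets_distr_iff[OF \<pi>m2] Pm Nb sp\<mu> by (auto simp: null_sets_def)
  qed
  have Xt0: "X t0 > 0"
  proof -
    have "(\<lambda>n. Y n t0) \<longlonglongrightarrow> X t0" using tendsto_uniform_limitI[OF unif, of t0] unfolding Y_def by simp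
    then have "0 \<le> X t0" by (rule tendsto_lowerbound) (auto simp: Ynn)
    then show ?thesis using X_t0 by simp
  qed
  define \<delta> where "\<delta> = X t0 / 2"
  have \<delta>0: "\<delta> > 0" using Xt0 by (simp add: \<delta>_def)
  obtain r0 where r0: "r0 > 0" and r0X: "\<And>t. t \<in> ball t0 r0 \<Longrightarrow> X t > \<delta>"
  proof -
    obtain d where d: "d > 0" "\<And>t. dist t t0 < d \<Longrightarrow> dist (X t) (X t0) < \<delta>"
      using X_cont \<delta>0 unfolding continuous_on_iff by blast
    have "X t > \<delta>" if "t \<in> ball t0 d" for t
    proof -
      have "dist (X t) (X t0) < \<delta>" using d(2)[of t] that by (simp add: dist_commute)
      then show ?thesis unfolding \<delta>_def dist_real_def by linarith
    qed
    then show ?thesis using that d(1) by blast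
  qed
  have evY: "\<forall>\<^sub>F n in sequentially. \<forall>t \<in> ball t0 r0. Y n t > \<delta> / 2"
  proof -
    have "\<forall>\<^sub>F n in sequentially. \<forall>t. \<bar>Y n t - X t\<bar> < \<delta> / 2" using unif'[of "\<delta>/2"] \<delta>0 by simp
    then show ?thesis
    proof (rule eventually_mono)
      fix n assume h: "\<forall>t. \<bar>Y n t - X t\<bar> < \<delta> / 2"
      show "\<forall>t\<in>ball t0 r0. \<delta> / 2 < Y n t"
      proof
        fix t assume "t \<in> ball t0 r0"
        then have "X t > \<delta>" by (rule r0X)
        moreover have "\<bar>Y n t - X t\<bar> < \<delta> / 2" using h by blast
        ultimately show "\<delta> / 2 < Y n t" by linarith
      qed
    qed
  qed
  have cimg: "closed (\<pi> ` measure_support \<mu>)"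
  proof -
    have "compact (measure_support \<mu>)"
      using compact_Int_closed[OF Z_compact support_closed[of \<mu>]] by simp
    then have "compact (\<pi> ` measure_support \<mu>)"
      using compact_continuous_image continuous_on_subset[OF \<pi>c] by blast
    then show ?thesis by (rule compact_imp_closed)
  qed
  have sub: "ball t0 r0 \<subseteq> \<pi> ` measure_support \<mu>"
  proof
    fix t assume t: "t \<in> ball t0 r0"
    show "t \<in> \<pi> ` measure_support \<mu>"
    proof (rule ccontr)
      assume nt: "t \<notin> \<pi> ` measure_support \<mu>"
      have "open (- (\<pi> ` measure_support \<mu>))" using cimg by auto
      then obtain e where e: "e > 0" "ball t e \<subseteq> - (\<pi> ` measure_support \<mu>)"
        using nt open_contains_ball by blast
      define r where "r = min (e/2) ((r0 - dist t0 t)/2)"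
      have r: "r > 0" using e t by (simp add: r_def)
      have cb1: "cball t r \<subseteq> ball t e" using r e by (auto simp: r_def)
      have cb2: "cball t r \<subseteq> ball t0 r0"
      proof
        fix s assume "s \<in> cball t r"
        then have "dist t s \<le> r" by simp
        moreover have "dist t0 s \<le> dist t0 t + dist t s" by (rule dist_triangle)
        ultimately show "s \<in> ball t0 r0" using t by (auto simp: r_def)
      qed
      define F where "F = \<pi> -` cball t r"
      have Fc: "closed F" unfolding F_def using \<pi>c by (intro closed_vimage) auto
      have Fd: "F \<inter> measure_support \<mu> = {}" using e cb1 by (auto simp: F_def)
      have F0: "emeasure \<mu> F = 0" by (rule support_null[OF Z_compact \<mu>_borel Fc Fd])
      have Fs: "F \<in> sets \<mu>" using Fc \<mu>_borel by auto
      define g where "g s = max 0 (r - dist s t)" for s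
      have gc: "continuous_on UNIV g" unfolding g_def by (intro continuous_intros)
      have gnn: "0 \<le> g s" for s unfolding g_def by simp
      have g0: "g s \<noteq> 0 \<Longrightarrow> s \<in> ball t r" for s unfolding g_def by (auto simp: dist_commute)
      have int0: "(\<integral>z. g (\<pi> z) \<partial>\<mu>) = 0"
      proof (rule integral_eq_zero_AE)
        show "AE z in \<mu>. g (\<pi> z) = 0"
        proof (rule AE_I')
          show "F \<in> null_sets \<mu>" using F0 Fs by (simp add: null_sets_def)
          show "{z \<in> space \<mu>. g (\<pi> z) \<noteq> 0} \<subseteq> F" using g0 by (force simp: F_def)
        qed
      qed
      define G where "G = (\<integral>\<^sup>+ s. ennreal (g s) \<partial>lborel)"
      have gm: "g \<in> borel_measurable borel" using gc by (rule borel_measurable_continuous_onI)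
      have Gpos: "G > 0"
      proof -
        have "emeasure lborel (ball t (r/2)) > 0"
          using r by (simp add: emeasure_ball)
        then have "0 < ennreal (r/2) * emeasure lborel (ball t (r/2))"
          using r by (simp add: ennreal_zero_less_mult_iff)
        also have "\<dots> = (\<integral>\<^sup>+ s. ennreal (r/2) * indicator (ball t (r/2)) s \<partial>lborel)"
          by (simp add: nn_integral_cmult_indicator)
        also have "\<dots> \<le> G" unfolding G_def
        proof (rule nn_integral_mono)
          fix s
          show "ennreal (r/2) * indicator (ball t (r/2)) s \<le> ennreal (g s)"
          proof (cases "s \<in> ball t (r/2)")
            case True
            then have "r/2 \<le> g s" unfolding g_def by (auto simp: dist_commute max_def)
            then show ?thesis using True by (simp add: ennreal_leI)
          qed simp
        qed
        finally show ?thesis .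
      qed
      define Lb where "Lb = ennreal c * ennreal (\<delta>/2) * G"
      have Lbpos: "Lb > 0" unfolding Lb_def using cpos \<delta>0 Gpos by (simp add: ennreal_zero_less_mult_iff)
      have evL: "\<forall>\<^sub>F n in sequentially. Lb \<le> ennreal (\<integral>z. g (\<pi> z) * \<mu>n n z \<partial>H)"
        using evY
      proof (rule eventually_mono)
        fix n assume h: "\<forall>t \<in> ball t0 r0. Y n t > \<delta> / 2"
        have "Lb = (\<integral>\<^sup>+ s. ennreal (g s) * (ennreal c * ennreal (\<delta>/2)) \<partial>lborel)"
        proof -
          have gme: "(\<lambda>s. ennreal (g s)) \<in> borel_measurable lborel"
            using measurable_compose[OF gm measurable_ennreal] by simp
          have "(\<integral>\<^sup>+ s. ennreal (g s) * (ennreal c * ennreal (\<delta>/2)) \<partial>lborel) = G * (ennreal c * ennreal (\<delta>/2))"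
            unfolding G_def by (rule nn_integral_multc[OF gme])
          then show ?thesis by (simp add: Lb_def mult_ac)
        qed
        also have "\<dots> \<le> (\<integral>\<^sup>+ s. ennreal (g s) * (\<integral>\<^sup>+ z. ennreal (\<rho> z) * ennreal (\<mu>n n z) \<partial>\<eta> s) \<partial>lborel)"
        proof (rule nn_integral_mono)
          fix s
          show "ennreal (g s) * (ennreal c * ennreal (\<delta>/2)) \<le> ennreal (g s) * (\<integral>\<^sup>+ z. ennreal (\<rho> z) * ennreal (\<mu>n n z) \<partial>\<eta> s)"
          proof (cases "g s = 0")
            case False
            then have "s \<in> ball t r" by (rule g0)
            then have "s \<in> ball t0 r0" using cb2 ball_subset_cball by blast
            then have "\<delta>/2 < Y n s" using h by blast
            then have "\<delta>/2 \<le> Y n s" by simp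
            then have "ennreal c * ennreal (\<delta>/2) \<le> ennreal c * ennreal (Y n s)"
              by (intro mult_left_mono ennreal_leI) auto
            also have "\<dots> \<le> (\<integral>\<^sup>+ z. ennreal (\<rho> z) * ennreal (\<mu>n n z) \<partial>\<eta> s)" by (rule lowb)
            finally show ?thesis by (intro mult_left_mono) auto
          qed simp
        qed
        also have "\<dots> = ennreal (\<integral>z. g (\<pi> z) * \<mu>n n z \<partial>H)" by (rule key[OF gc gnn, symmetric])
        finally show "Lb \<le> ennreal (\<integral>z. g (\<pi> z) * \<mu>n n z \<partial>H)" .
      qed
      have "(\<lambda>n. ennreal (\<integral>z. g (\<pi> z) * \<mu>n n z \<partial>H)) \<longlonglongrightarrow> ennreal (\<integral>z. g (\<pi> z) \<partial>\<mu>)"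
        using conv[OF gc] by (rule tendsto_ennrealI)
      then have "Lb \<le> ennreal (\<integral>z. g (\<pi> z) \<partial>\<mu>)"
        by (rule tendsto_lowerbound[OF _ evL]) simp
      then show False using int0 Lbpos by simp
    qed
  qed
  have "t0 \<in> interior (\<pi> ` measure_support \<mu>)"
    using interior_maximal[OF sub open_ball] r0 by auto
  then show ?thesis using part1 by simp
qed

end
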